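(* For all integers $n\ge1$, $k\ge1$ and every sequence $\boldsymbol a$ of positive reals, with $\alpha_n(j;t)=A_n(j)\big(t^j-(t-1)^j\big)$, \[ \theta_{n;k}(t)=\frac1{k!}\det\begin{pmatrix} \alpha_n(1;t)&-1&0&\cdots&0\\ \alpha_n(2;t)&\alpha_n(1;t)&-2&\cdots&0\\ \vdots&\vdots&\vdots&\ddots&\vdots\\ \alpha_n(k-1;t)&\alpha_n(k-2;t)&\alpha_n(k-3;t)&\cdots&-(k-1)\\ \alpha_n(k;t)&\alpha_n(k-1;t)&\alpha_n(k-2;t)&\cdots&\alpha_n(1;t) \end{pmatrix}, \] i.e. the $k\times k$ matrix with entries $M_{i,j}=\alpha_n(i-j+1;t)$ for $j\le i$, $M_{i,i+1}=-i$, and $M_{i,j}=0$ for $j\ge i+2$.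
   Context: Let $\boldsymbol a=(a_j)_{j\ge1}$ be a sequence of positive reals. For integers $n\ge1$, $k\ge0$ let $\mathcal M_{n,k}=\{(\ell_1,\dots,\ell_k)\in\mathbb N^k: n\ge\ell_1\ge\cdots\ge\ell_k\ge1\}$. For $\vec\ell\in\mathcal M_{n,k}$ let $\sigma(\vec\ell)=|\{1\le j\le k-1:\ell_j=\ell_{j+1}\}|$ and $w(\vec\ell)=\prod_{j=1}^k a_{\ell_j}$. Define $\theta_{n;k}(t)=\sum_{\vec\ell\in\mathcal M_{n,k}}w(\vec\ell)\,t^{\sigma(\vec\ell)}$, and $A_n(j)=\sum_{m=1}^n a_m^j$. *)

theory Defs
  imports Complex_Main "Jordan_Normal_Form.Determinant"
begin

text \<open>Weakly decreasing sequences n \<ge> l_1 \<ge> ... \<ge> l_k \<ge> 1, represented as lists of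
  length k (list index i corresponds to l_(i+1)).\<close>
definition Mset :: "nat \<Rightarrow> nat \<Rightarrow> nat list set" where
  "Mset n k = {l. length l = k \<and> (\<forall>i<k. 1 \<le> l ! i \<and> l ! i \<le> n)
                  \<and> (\<forall>i. Suc i < k \<longrightarrow> l ! Suc i \<le> l ! i)}"

definition sigma :: "nat list \<Rightarrow> nat" where
  "sigma l = card {j. Suc j < length l \<and> l ! j = l ! Suc j}"

definition weight :: "(nat \<Rightarrow> real) \<Rightarrow> nat list \<Rightarrow> real" where
  "weight a l = prod_list (map a l)"

definition theta :: "(nat \<Rightarrow> real) \<Rightarrow> nat \<Rightarrow> nat \<Rightarrow> real \<Rightarrow> real" where
  "theta a n k t = (\<Sum>l\<in>Mset n k. weight a l * t ^ sigma l)"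

definition Apow :: "(nat \<Rightarrow> real) \<Rightarrow> nat \<Rightarrow> nat \<Rightarrow> real" where
  "Apow a n j = (\<Sum>m=1..n. a m ^ j)"

definition alpha :: "(nat \<Rightarrow> real) \<Rightarrow> nat \<Rightarrow> nat \<Rightarrow> real \<Rightarrow> real" where
  "alpha a n j t = Apow a n j * (t ^ j - (t - 1) ^ j)"

text \<open>The k x k matrix, 0-based: entry (i,j) is M_{i+1,j+1} of the paper.\<close>
definition thetaMat :: "(nat \<Rightarrow> real) \<Rightarrow> nat \<Rightarrow> nat \<Rightarrow> real \<Rightarrow> real mat" where
  "thetaMat a n k t = mat k k (\<lambda>(i, j).
      if j \<le> i then alpha a n (i - j + 1) t
      else if j = i + 1 then - real (i + 1)
      else 0)"

end

theory Submission imports Defs "HOL-Computational_Algebra.Formal_Power_Series" begin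
fun sig :: "nat list \<Rightarrow> nat" where
  "sig [] = 0" | "sig [x] = 0" | "sig (x#y#xs) = (if x = y then 1 else 0) + sig (y#xs)"

lemma sigma_sig: "sigma l = sig l"
proof (induction l rule: sig.induct)
  case 1 show ?case by (simp add: sigma_def)
next
  case (2 x) show ?case by (simp add: sigma_def)
next
  case (3 x y xs)
  define B where "B = {j. Suc j < length (y#xs) \<and> (y#xs) ! j = (y#xs) ! Suc j}"
  have eq: "{j. Suc j < length (x#y#xs) \<and> (x#y#xs) ! j = (x#y#xs) ! Suc j}
     = (if x = y then {0} else {}) \<union> Suc ` B"
    apply (rule Set.set_eqI)
    subgoal for j by (cases j) (auto simp: B_def image_iff)
    done
  have fB: "finite B" unfolding B_def by (rule finite_subset[of _ "{..<length (y#xs)}"]) auto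
  have "sigma (x#y#xs) = card ((if x = y then {0} else {}) \<union> Suc ` B)"
    unfolding sigma_def eq ..
  also have "\<dots> = (if x = y then 1 else 0) + card B"
    using fB by (subst card_Un_disjoint) (auto simp: card_image)
  also have "card B = sigma (y#xs)" unfolding B_def sigma_def ..
  finally show ?case using 3 by simp
qed

lemma sig_rep: "x \<notin> set r \<Longrightarrow> sig (replicate (Suc m) x @ r) = m + sig r"
proof (induction m)
  case 0 thus ?case by (cases r) auto
next
  case (Suc m) thus ?case by simp
qed

lemma Mset_iff: "l \<in> Mset n k \<longleftrightarrow> length l = k \<and> set l \<subseteq> {1..n} \<and> sorted_wrt (\<ge>) l"
proof -
  have "sorted_wrt (\<ge>) l \<longleftrightarrow> (\<forall>i. Suc i < length l \<longrightarrow> l ! Suc i \<le> l ! i)"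
    by (subst sorted_wrt_iff_nth_Suc_transp) (auto simp: transp_def)
  moreover have "set l \<subseteq> {1..n} \<longleftrightarrow> (\<forall>i<length l. 1 \<le> l ! i \<and> l ! i \<le> n)"
    by (auto simp: in_set_conv_nth subset_iff)
  ultimately show ?thesis unfolding Mset_def by auto
qed

lemma finite_Mset: "finite (Mset n k)"
proof (rule finite_subset[OF _ finite_lists_length_eq[OF finite_atLeastAtMost, of 1 n k]])
  show "Mset n k \<subseteq> {xs. set xs \<subseteq> {1..n} \<and> length xs = k}"
  proof
    fix l assume "l \<in> Mset n k" thus "l \<in> {xs. set xs \<subseteq> {1..n} \<and> length xs = k}"
      unfolding Mset_iff by simp
  qed
qed

lemma theta_0: "theta a 0 k t = (if k = 0 then 1 else 0)"
proof -
  have "Mset 0 k = (if k = 0 then {[]} else {})"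
    by (auto simp: Mset_iff)
  thus ?thesis by (simp add: theta_def weight_def sigma_def)
qed

lemma theta_k0: "theta a n 0 t = 1"
proof -
  have "Mset n 0 = {[]}" by (auto simp: Mset_iff)
  thus ?thesis by (simp add: theta_def weight_def sigma_def)
qed

lemma sorted_rep: "sorted_wrt (\<ge>) (replicate m (x::nat))"
  by (induction m) auto

lemma Mset_decomp:
  "Mset (Suc n) k = (\<lambda>(m, r). replicate m (Suc n) @ r) ` (SIGMA m:{0..k}. Mset n (k - m))"
proof (intro Set.set_eqI iffI)
  fix l assume l: "l \<in> Mset (Suc n) k"
  define N where "N = Suc n"
  define m where "m = length (takeWhile ((=) N) l)"
  define r where "r = dropWhile ((=) N) l"
  have tw: "takeWhile ((=) N) l = replicate m N"
    unfolding m_def by (rule replicate_length_same[symmetric]) (auto dest: set_takeWhileD)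
  have lr: "l = replicate m N @ r"
    using takeWhile_dropWhile_id[of "(=) N" l] unfolding tw r_def by simp
  have L: "length l = k" "set l \<subseteq> {1..N}" "sorted_wrt (\<ge>) l"
    using l unfolding N_def Mset_iff by auto
  have mk: "m \<le> k" using L(1) lr by (metis le_add1 length_append length_replicate)
  have rs: "sorted_wrt (\<ge>) r" using L(3) lr by (simp add: sorted_wrt_append)
  have rset: "set r \<subseteq> {1..N}" using L(2) lr by auto
  have "set r \<subseteq> {1..n}"
  proof
    fix z assume z: "z \<in> set r"
    then obtain y ys where r: "r = y # ys" by (cases r) auto
    have "y \<noteq> N" using hd_dropWhile[of "(=) N" l] r unfolding r_def by auto
    hence "y \<le> n" using rset r unfolding N_def by auto
    moreover have "z \<le> y" using z rs r by auto
    ultimately show "z \<in> {1..n}" using z rset by auto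
  qed
  hence "r \<in> Mset n (k - m)" using rs L(1) lr by (auto simp: Mset_iff)
  thus "l \<in> (\<lambda>(m, r). replicate m (Suc n) @ r) ` (SIGMA m:{0..k}. Mset n (k - m))"
    using mk lr unfolding N_def by force
next
  fix l assume "l \<in> (\<lambda>(m, r). replicate m (Suc n) @ r) ` (SIGMA m:{0..k}. Mset n (k - m))"
  then obtain m r where m: "m \<le> k" and r: "r \<in> Mset n (k - m)" and l: "l = replicate m (Suc n) @ r"
    by auto
  show "l \<in> Mset (Suc n) k"
    using m r unfolding l Mset_iff by (auto simp: sorted_wrt_append sorted_rep)
qed

lemma inj_decomp:
  "inj_on (\<lambda>(m, r). replicate m (Suc n) @ r) (SIGMA m:{0..k}. Mset n (k - m))"
proof (rule inj_onI, clarsimp)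
  fix m r m' r'
  assume r: "r \<in> Mset n (k - m)" and r': "r' \<in> Mset n (k - m')"
    and eq: "replicate m (Suc n) @ r = replicate m' (Suc n) @ r'"
  have "Suc n \<notin> set r" "Suc n \<notin> set r'" using r r' by (auto simp: Mset_iff)
  hence "filter ((=) (Suc n)) r = []" "filter ((=) (Suc n)) r' = []"
    by (auto simp: filter_empty_conv)
  hence "replicate m (Suc n) = replicate m' (Suc n)"
    using arg_cong[OF eq, of "filter ((=) (Suc n))"] by (simp add: filter_replicate)
  hence "m = m'" by (metis length_replicate)
  thus "m = m' \<and> r = r'" using eq by simp
qed

lemma theta_Suc:
  "theta a (Suc n) k t = (\<Sum>m=0..k. (if m = 0 then 1 else a (Suc n) ^ m * t ^ (m - 1))
      * theta a n (k - m) t)"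
proof -
  define f where "f = (\<lambda>l. weight a l * t ^ sigma l)"
  have trm: "f (replicate m (Suc n) @ r) =
     (if m = 0 then 1 else a (Suc n) ^ m * t ^ (m - 1)) * f r" if r: "r \<in> Mset n j" for m r j
  proof -
    have nr: "Suc n \<notin> set r" using r by (auto simp: Mset_iff)
    have w: "weight a (replicate m (Suc n) @ r) = a (Suc n) ^ m * weight a r"
      by (simp add: weight_def prod_list_replicate)
    show ?thesis
    proof (cases m)
      case 0 thus ?thesis by simp
    next
      case (Suc m')
      have "sigma (replicate m (Suc n) @ r) = m' + sigma r"
        unfolding sigma_sig Suc using sig_rep[OF nr] .
      thus ?thesis unfolding f_def w using Suc by (simp add: power_add)
    qed
  qed
  have "theta a (Suc n) k t = sum f (Mset (Suc n) k)" unfolding theta_def f_def ..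
  also have "\<dots> = sum (f \<circ> (\<lambda>(m, r). replicate m (Suc n) @ r)) (SIGMA m:{0..k}. Mset n (k - m))"
    unfolding Mset_decomp by (rule sum.reindex[OF inj_decomp])
  also have "\<dots> = (\<Sum>(m,r)\<in>(SIGMA m:{0..k}. Mset n (k - m)). f (replicate m (Suc n) @ r))"
    by (rule sum.cong) auto
  also have "\<dots> = (\<Sum>m=0..k. \<Sum>r\<in>Mset n (k - m). f (replicate m (Suc n) @ r))"
    by (rule sum.Sigma[symmetric]) (auto simp: finite_Mset)
  also have "\<dots> = (\<Sum>m=0..k. (if m = 0 then 1 else a (Suc n) ^ m * t ^ (m - 1))
      * theta a n (k - m) t)"
    unfolding theta_def f_def[symmetric] sum_distrib_left
    by (intro sum.cong refl) (simp add: trm)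
  finally show ?thesis .
qed

lemma U_sum: "(\<Sum>i\<le>m. t ^ i * ((t::real) ^ (m - i) - (t - 1) ^ (m - i)))
   = real (m + 1) * t ^ m - (t ^ (m+1) - (t - 1) ^ (m+1))"
proof (induction m)
  case 0 thus ?case by simp
next
  case (Suc m)
  have "(\<Sum>i\<le>Suc m. t ^ i * (t ^ (Suc m - i) - (t - 1) ^ (Suc m - i)))
     = (t ^ Suc m - (t - 1) ^ Suc m) + t * (\<Sum>i\<le>m. t ^ i * (t ^ (m - i) - (t - 1) ^ (m - i)))"
    by (subst sum.atMost_Suc_shift) (simp add: sum_distrib_left mult.assoc)
  also have "\<dots> = (t ^ Suc m - (t - 1) ^ Suc m) + t * (real (m + 1) * t ^ m - (t ^ (m+1) - (t - 1) ^ (m+1)))"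
    using Suc by simp
  also have "\<dots> = real (Suc m + 1) * t ^ Suc m - (t ^ (Suc m+1) - (t - 1) ^ (Suc m+1))"
    by (simp add: algebra_simps)
  finally show ?case .
qed

definition Th where "Th a n t = Abs_fps (\<lambda>k. theta a n k t)"
definition Fp :: "(nat \<Rightarrow> real) \<Rightarrow> nat \<Rightarrow> real \<Rightarrow> real fps" where
  "Fp a n t = Abs_fps (\<lambda>m. if m = 0 then 1 else a n ^ m * t ^ (m - 1))"
definition gp :: "(nat \<Rightarrow> real) \<Rightarrow> nat \<Rightarrow> real \<Rightarrow> real fps" where
  "gp a n t = Abs_fps (\<lambda>j. a n ^ j * (t ^ j - (t - 1) ^ j))"
definition Gp where "Gp a n t = Abs_fps (\<lambda>j. alpha a n j t)"

lemma key: "fps_X * fps_deriv (Fp a n t) = Fp a n t * gp a n t"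
proof (rule fps_ext)
  fix m
  show "fps_nth (fps_X * fps_deriv (Fp a n t)) m = fps_nth (Fp a n t * gp a n t) m"
  proof (cases m)
    case 0 thus ?thesis by (simp add: fps_mult_nth Fp_def gp_def)
  next
    case (Suc m')
    have "fps_nth (Fp a n t * gp a n t) m = (\<Sum>i\<le>Suc m'. fps_nth (Fp a n t) i * fps_nth (gp a n t) (Suc m' - i))"
      unfolding fps_mult_nth Suc atLeast0AtMost ..
    also have "\<dots> = a n ^ Suc m' * (t ^ Suc m' - (t-1) ^ Suc m')
       + (\<Sum>i\<le>m'. a n ^ Suc m' * (t ^ i * (t ^ (m' - i) - (t - 1) ^ (m' - i))))"
      apply (subst sum.atMost_Suc_shift)
      apply (simp add: Fp_def gp_def)
      apply (intro sum.cong refl)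
      subgoal for i
      proof -
        assume "i \<in> {..m'}"
        then obtain d where d: "m' = i + d" by (metis atMost_iff le_Suc_ex)
        show ?thesis unfolding d by (simp add: power_add algebra_simps)
      qed
      done
    also have "\<dots> = a n ^ Suc m' * ((t ^ Suc m' - (t-1) ^ Suc m')
       + (\<Sum>i\<le>m'. t ^ i * (t ^ (m' - i) - (t - 1) ^ (m' - i))))"
      by (simp add: sum_distrib_left distrib_left)
    also have "\<dots> = a n ^ Suc m' * (real (Suc m') * t ^ m')"
      unfolding U_sum by simp
    also have "\<dots> = fps_nth (fps_X * fps_deriv (Fp a n t)) m"
      unfolding Suc by (simp add: fps_X_mult_nth Fp_def)
    finally show ?thesis ..
  qed
qed

lemma Th_Suc: "Th a (Suc n) t = Fp a (Suc n) t * Th a n t"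
  by (rule fps_ext) (simp add: Th_def Fp_def fps_mult_nth theta_Suc)

lemma Gp_Suc: "Gp a (Suc n) t = Gp a n t + gp a (Suc n) t"
  by (rule fps_ext) (simp add: Gp_def gp_def alpha_def Apow_def algebra_simps)

lemma newton_fps: "fps_X * fps_deriv (Th a n t) = Th a n t * Gp a n t"
proof (induction n)
  case 0
  have "Th a 0 t = 1" by (rule fps_ext) (simp add: Th_def theta_0)
  moreover have "Gp a 0 t = 0" by (rule fps_ext) (simp add: Gp_def alpha_def Apow_def)
  ultimately show ?case by simp
next
  case (Suc n)
  let ?F = "Fp a (Suc n) t"
  have "fps_X * fps_deriv (Th a (Suc n) t) = ?F * (fps_X * fps_deriv (Th a n t))
      + (fps_X * fps_deriv ?F) * Th a n t"
    by (simp add: Th_Suc fps_deriv_mult algebra_simps)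
  also have "\<dots> = ?F * (Th a n t * Gp a n t) + (?F * gp a (Suc n) t) * Th a n t"
    by (simp add: Suc key)
  also have "\<dots> = Th a (Suc n) t * Gp a (Suc n) t"
    by (simp add: Th_Suc Gp_Suc algebra_simps)
  finally show ?case .
qed

lemma newton: "real k * theta a n k t = (\<Sum>i=0..k. theta a n i t * alpha a n (k - i) t)"
proof -
  have "fps_nth (fps_X * fps_deriv (Th a n t)) k = fps_nth (Th a n t * Gp a n t) k"
    by (simp add: newton_fps)
  moreover have "fps_nth (Th a n t * Gp a n t) k = (\<Sum>i=0..k. theta a n i t * alpha a n (k - i) t)"
    by (simp add: fps_mult_nth Th_def Gp_def)
  moreover have "fps_nth (fps_X * fps_deriv (Th a n t)) k = real k * theta a n k t"
  proof (cases k)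
    case 0 thus ?thesis by (simp add: fps_X_mult_nth)
  next
    case (Suc k') thus ?thesis by (simp add: fps_X_mult_nth Th_def)
  qed
  ultimately show ?thesis by simp
qed

lemma mat_part:
  fixes th al :: "nat \<Rightarrow> real" and k :: nat
  assumes k: "k \<ge> 1" and al0: "al 0 = 0" and th0: "th 0 = 1"
    and rec: "\<And>m. real m * th m = (\<Sum>i=0..m. th i * al (m - i))"
  defines "M \<equiv> mat k k (\<lambda>(i, j). if j \<le> i then al (i - j + 1)
      else if j = i + 1 then - real (i + 1) else 0)"
  shows "det M = fact k * th k"
proof -
  have Mc: "M \<in> carrier_mat k k" unfolding M_def by simp
  define x where "x = vec k th"
  have xc: "x \<in> carrier_vec k" unfolding x_def by simp
  have Mx: "M *\<^sub>v x = vec k (\<lambda>i. if i = k - 1 then real k * th k else 0)"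
  proof (rule eq_vecI)
    fix i assume i: "i < dim_vec (vec k (\<lambda>i. if i = k - 1 then real k * th k else 0))"
    hence ik: "i < k" by simp
    have "(M *\<^sub>v x) $ i = (\<Sum>j=0..<k. M $$ (i,j) * th j)"
      using ik Mc unfolding x_def by (simp add: scalar_prod_def)
    also have "\<dots> = (\<Sum>j=0..<k. (if j \<le> i then al (i - j + 1) * th j else 0)
        + (if j = i + 1 then - real (i + 1) * th j else 0))"
      by (rule sum.cong) (use ik in \<open>auto simp: M_def\<close>)
    also have "\<dots> = (\<Sum>j=0..i. al (i - j + 1) * th j)
        + (if i + 1 < k then - real (i+1) * th (i+1) else 0)"
    proof -
      have "(\<Sum>j=0..<k. (if j \<le> i then al (i - j + 1) * th j else 0))
          = (\<Sum>j\<in>{0..i}. al (i - j + 1) * th j)"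
        using ik by (intro sum.mono_neutral_cong_right) auto
      moreover have "(\<Sum>j=0..<k. (if j = i + 1 then - real (i + 1) * th j else 0))
          = (if i + 1 < k then - real (i+1) * th (i+1) else 0)"
        by (simp add: sum.delta)
      ultimately show ?thesis by (simp add: sum.distrib)
    qed
    also have "\<dots> = (if i = k - 1 then real k * th k else 0)"
    proof -
      have r: "real (i+1) * th (i+1) = (\<Sum>j=0..i. al (i - j + 1) * th j)"
        using rec[of "i+1"] al0 by (simp add: Suc_diff_le mult.commute)
      show ?thesis
      proof (cases "i + 1 < k")
        case True
        hence "i \<noteq> k - 1" by auto
        have "(\<Sum>j=0..i. al (i - j + 1) * th j) + (- real (i+1) * th (i+1)) = 0"
          using r by linarith
        thus ?thesis using True \<open>i \<noteq> k - 1\<close> by simp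
      next
        case False
        hence "i = k - 1" "i + 1 = k" using ik by auto
        thus ?thesis using r by simp
      qed
    qed
    finally show "(M *\<^sub>v x) $ i = vec k (\<lambda>i. if i = k - 1 then real k * th k else 0) $ i"
      using ik by simp
  qed (simp add: M_def)
  note adj = adj_mat[OF Mc]
  have "(adj_mat M * M) *\<^sub>v x = adj_mat M *\<^sub>v (M *\<^sub>v x)"
    using adj(1) Mc xc by simp
  hence eq: "(det M \<cdot>\<^sub>m 1\<^sub>m k *\<^sub>v x) $ 0 = (adj_mat M *\<^sub>v (M *\<^sub>v x)) $ 0"
    using adj(3) by simp
  have lhs: "(det M \<cdot>\<^sub>m 1\<^sub>m k *\<^sub>v x) $ 0 = det M"
    using k xc th0 unfolding x_def by simp
  have "(adj_mat M *\<^sub>v (M *\<^sub>v x)) $ 0 = (\<Sum>i=0..<k. adj_mat M $$ (0,i) *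
      (if i = k - 1 then real k * th k else 0))"
    using k adj(1) unfolding Mx by (simp add: scalar_prod_def)
  also have "\<dots> = adj_mat M $$ (0, k-1) * (real k * th k)"
    using k by (simp add: sum.delta' if_distrib cong: if_cong)
  also have "adj_mat M $$ (0, k-1) = cofactor M (k-1) 0"
    using k Mc by (simp add: adj_mat_def)
  also have "\<dots> = fact (k - 1)"
  proof -
    define D where "D = mat_delete M (k-1) 0"
    have Dc: "D \<in> carrier_mat (k-1) (k-1)" unfolding D_def using mat_delete_carrier[OF Mc] .
    have Dij: "\<And>i j. i < k-1 \<Longrightarrow> j < k-1 \<Longrightarrow> D $$ (i,j) = M $$ (i, Suc j)"
      unfolding D_def mat_delete_def using Mc by auto
    have "det D = prod_list (diag_mat D)"
      by (rule det_lower_triangular[OF _ Dc]) (simp add: Dij M_def)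
    also have "\<dots> = (\<Prod>i=0..<k-1. - real (i+1))"
      unfolding prod_list_diag_prod using Dc by (intro prod.cong) (auto simp: Dij M_def)
    also have "\<dots> = (\<Prod>i=0..<k-1. (-1) * real (i+1))" by simp
    also have "\<dots> = (-1)^(k-1) * (\<Prod>i=0..<k-1. real (i+1))"
      by (subst prod.distrib) simp
    also have "(\<Prod>i=0..<k-1. real (i+1)) = fact (k-1)"
      by (simp add: fact_prod_Suc)
    finally have "det D = (-1)^(k-1) * fact (k-1)" .
    thus ?thesis unfolding cofactor_def D_def[symmetric]
      by (simp flip: power_add)
  qed
  finally have "det M = fact (k-1) * (real k * th k)" using eq lhs by simp
  also have "\<dots> = fact k * th k"
  proof -
    obtain k' where kk: "k = Suc k'" using k by (cases k) auto
    show ?thesis unfolding kk by (simp add: algebra_simps)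
  qed
  finally show ?thesis .
qed
theorem mainTheorem4:
  fixes a :: "nat \<Rightarrow> real" and n k :: nat and t :: real
  assumes "\<And>j. j \<ge> 1 \<Longrightarrow> a j > 0"
    and "n \<ge> 1" and "k \<ge> 1"
  shows "theta a n k t = det (thetaMat a n k t) / fact k"
proof -
  have "det (thetaMat a n k t) = fact k * theta a n k t"
    unfolding thetaMat_def
    by (rule mat_part[OF assms(3)]) (simp_all add: alpha_def theta_k0 newton mult.commute)
  thus ?thesis by simp
qed

end
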